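(* There is a decreasing sequence $\kappa_m\ge\kappa^*:=\kappa^*(e_0)>0$ such that for every $m>j\ge3$, $$\rho_{k_j}<\sigma_m(\rho_{k_j})-\rho_{k_j}\kappa_m.$$ In particular, $\rho_{k_j}<\sigma_\infty(\rho_{k_j})-\rho_{k_j}\kappa^*$.
   Context: Ellipse with semi-axes $0<b\le a$, eccentricity $e_0=\sqrt{1-b^2/a^2}$ with $0<e_0<1$. For $0\le k<1$, $F(\varphi;k)=\int_0^\varphi(1-k^2\sin^2\tau)^{-1/2}d\tau$, $K(k)=F(\pi/2;k)$. For $\lambda\in(0,b)$, $k_\lambda=\sqrt{(a^2-b^2)/(a^2-\lambda^2)}$, $\omega_\lambda=F(\arcsin(\lambda/b);k_\lambda)/(2K(k_\lambda))$ (strictly increasing from $0$ to $1/2$); for $q\ge3$, $\omega_{\lambda_q}=1/q$ and $k_q=k_{\lambda_q}\in(e_0,1)$, strictly decreasing in $q$ with $k_q\to e_0$. $\rho_{k}=\mathrm{arcosh}(1/k)$. For $m>j\ge3$, $\sigma_m(\rho_{k_j})=\frac{2\pi}{4K(k_m)}\int_0^{\rho_{k_j}}\frac{dt}{\sqrt{1-k_m^2\cosh^2t}}$, and $\sigma_\infty(\rho_{k_j})=\frac{2\pi}{4K(e_0)}\int_0^{\rho_{k_j}}\frac{dt}{\sqrt{1-e_0^2\cosh^2t}}$. *)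

theory Defs
  imports "HOL-Analysis.Analysis"
begin

definition ellF :: "real \<Rightarrow> real \<Rightarrow> real" where
  "ellF phi k = integral {0..phi} (\<lambda>\<tau>. 1 / sqrt (1 - k\<^sup>2 * (sin \<tau>)\<^sup>2))"

definition ellK :: "real \<Rightarrow> real" where
  "ellK k = ellF (pi / 2) k"

definition k_lam :: "real \<Rightarrow> real \<Rightarrow> real \<Rightarrow> real" where
  "k_lam a b l = sqrt ((a\<^sup>2 - b\<^sup>2) / (a\<^sup>2 - l\<^sup>2))"

definition omega_lam :: "real \<Rightarrow> real \<Rightarrow> real \<Rightarrow> real" where
  "omega_lam a b l = ellF (arcsin (l / b)) (k_lam a b l) / (2 * ellK (k_lam a b l))"

definition lam_q :: "real \<Rightarrow> real \<Rightarrow> nat \<Rightarrow> real" where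
  "lam_q a b q = (THE l. 0 < l \<and> l < b \<and> omega_lam a b l = 1 / real q)"

definition k_q :: "real \<Rightarrow> real \<Rightarrow> nat \<Rightarrow> real" where
  "k_q a b q = k_lam a b (lam_q a b q)"

definition rho :: "real \<Rightarrow> real" where
  "rho k = arcosh (1 / k)"

text \<open>sigma with modulus kk: (2 pi / (4 K(kk))) * int_0^r dt / sqrt(1 - kk^2 cosh^2 t).
  sigma_m uses kk = k_m, sigma_infinity uses kk = e_0.\<close>
definition sigma :: "real \<Rightarrow> real \<Rightarrow> real" where
  "sigma kk r = 2 * pi / (4 * ellK kk) * integral {0..r} (\<lambda>t. 1 / sqrt (1 - kk\<^sup>2 * (cosh t)\<^sup>2))"

end

theory Submission
  imports Defs
begin

definition hk :: "real \<Rightarrow> real \<Rightarrow> real" where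
  "hk k t = 1 / sqrt (1 - k\<^sup>2 * (sin t)\<^sup>2)"

lemma ellF_hk: "ellF phi k = integral {0..phi} (hk k)"
  unfolding ellF_def hk_def by simp

lemma den_ge: fixes k t :: real assumes "\<bar>k\<bar> < 1" shows "1 - k\<^sup>2 \<le> 1 - k\<^sup>2 * (sin t)\<^sup>2" "0 < 1 - k\<^sup>2"
proof -
  have "(sin t)\<^sup>2 \<le> 1" using abs_sin_le_one[of t] by (simp add: abs_square_le_1)
  then have "k\<^sup>2 * (sin t)\<^sup>2 \<le> k\<^sup>2" by (simp add: mult_left_le)
  then show "1 - k\<^sup>2 \<le> 1 - k\<^sup>2 * (sin t)\<^sup>2" by simp
  show "0 < 1 - k\<^sup>2" using assms by (simp add: abs_square_less_1)
qed

lemma den_pos: "\<bar>k::real\<bar> < 1 \<Longrightarrow> 0 < 1 - k\<^sup>2 * (sin t)\<^sup>2"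
  using den_ge(1)[of k t] den_ge(2)[of k] by linarith

lemma den_ne: "\<bar>k::real\<bar> < 1 \<Longrightarrow> sqrt (1 - k\<^sup>2 * (sin t)\<^sup>2) \<noteq> 0"
  using den_pos[of k t] by simp

lemma cont_hk: "\<bar>k\<bar> < 1 \<Longrightarrow> continuous_on S (hk k)"
  unfolding hk_def
  by (intro continuous_intros) (use den_ne in blast)

lemma hk_cont_comp: fixes S :: "'a::t2_space set" assumes "continuous_on S kf" "continuous_on S pf" "\<And>x. x\<in>S \<Longrightarrow> \<bar>kf x\<bar> < 1"
  shows "continuous_on S (\<lambda>x. hk (kf x) (pf x))"
proof -
  have s: "continuous_on S (\<lambda>x. sin (pf x))" using assms(2) by (rule continuous_on_sin)
  have n: "\<forall>x\<in>S. sqrt (1 - (kf x)\<^sup>2 * (sin (pf x))\<^sup>2) \<noteq> 0" using assms(3) den_ne by blast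
  show ?thesis unfolding hk_def by (intro continuous_intros assms s n)
qed

lemma hk_int: "\<bar>k\<bar> < 1 \<Longrightarrow> hk k integrable_on {a..b}"
  by (simp add: cont_hk integrable_continuous_real)

lemma hk_ge1: "\<bar>k\<bar> < 1 \<Longrightarrow> 1 \<le> hk k t"
proof -
  assume k: "\<bar>k\<bar> < 1"
  have p: "0 < 1 - k\<^sup>2 * (sin t)\<^sup>2" using den_pos k .
  have "1 - k\<^sup>2 * (sin t)\<^sup>2 \<le> 1" by simp
  then have "sqrt (1 - k\<^sup>2 * (sin t)\<^sup>2) \<le> 1" by simp
  then show ?thesis unfolding hk_def using p by (simp add: le_divide_eq)
qed

lemma hk_le: "\<bar>k\<bar> < 1 \<Longrightarrow> hk k t \<le> 1 / sqrt (1 - k\<^sup>2)"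
proof -
  assume k: "\<bar>k\<bar> < 1"
  have "sqrt (1 - k\<^sup>2) \<le> sqrt (1 - k\<^sup>2 * (sin t)\<^sup>2)" using den_ge[OF k] by simp
  then show ?thesis unfolding hk_def using den_ge[OF k]
    by (simp add: frac_le)
qed

lemma ellF_ge: assumes "\<bar>k\<bar> < 1" "0 \<le> phi" shows "phi \<le> ellF phi k"
proof -
  have "integral {0..phi} (\<lambda>_. 1::real) \<le> integral {0..phi} (hk k)"
    by (rule integral_le) (auto simp: hk_int assms hk_ge1)
  then show ?thesis using assms by (simp add: ellF_hk)
qed

lemma ellF_le: assumes "\<bar>k\<bar> < 1" "0 \<le> phi" shows "ellF phi k \<le> phi / sqrt (1 - k\<^sup>2)"
proof -
  have "integral {0..phi} (hk k) \<le> integral {0..phi} (\<lambda>_. 1 / sqrt (1 - k\<^sup>2))"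
    by (rule integral_le) (auto simp: hk_int assms hk_le)
  then show ?thesis using assms by (simp add: ellF_hk)
qed

lemma ellK_ge: "\<bar>k\<bar> < 1 \<Longrightarrow> pi / 2 \<le> ellK k"
  unfolding ellK_def by (rule ellF_ge) auto

lemma ellF_deriv: assumes "\<bar>k\<bar> < 1" "0 < phi"
  shows "((\<lambda>x. ellF x k) has_real_derivative hk k phi) (at phi)"
proof -
  have h1: "((\<lambda>x. integral {0..x} (hk k)) has_real_derivative hk k phi) (at phi within {0..phi+1})"
    by (rule integral_has_real_derivative) (use assms cont_hk in auto)
  have "phi \<in> interior {0..phi+1}" using assms by auto
  then have eq: "at phi within {0..phi+1} = at phi" by (rule at_within_interior)
  show ?thesis unfolding ellF_hk using h1 by (simp only: eq)
qed

lemma ellF_cont: "\<bar>k\<bar> < 1 \<Longrightarrow> continuous_on {0..b} (\<lambda>x. ellF x k)"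
  unfolding ellF_hk by (rule indefinite_integral_continuous_1) (simp add: hk_int)

lemma ellF_0 [simp]: "ellF 0 k = 0"
  unfolding ellF_def by simp

lemma image_scale01: "0 < p \<Longrightarrow> (\<lambda>x. (1 / p) *\<^sub>R x + - ((1 / p) *\<^sub>R 0)) ` cbox 0 p = {0..1::real}"
proof -
  assume p: "0 < p"
  have "(\<lambda>x. (1 / p) *\<^sub>R x + - ((1 / p) *\<^sub>R 0)) ` cbox 0 p = (\<lambda>x. x / p) ` {0..p}" by simp
  also have "\<dots> = {0..1}"
  proof
    show "(\<lambda>x. x / p) ` {0..p} \<subseteq> {0..1}" using p by auto
    show "{0..1} \<subseteq> (\<lambda>x. x / p) ` {0..p}"
    proof
      fix y :: real assume "y \<in> {0..1}"
      then have "p * y \<in> {0..p}" using p by (auto simp: mult_le_cancel_left1)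
      moreover have "y = (p * y) / p" using p by simp
      ultimately show "y \<in> (\<lambda>x. x / p) ` {0..p}" by blast
    qed
  qed
  finally show ?thesis .
qed

definition Fs :: "real \<Rightarrow> real \<Rightarrow> real" where
  "Fs phi k = phi * integral {0..1} (\<lambda>s. hk k (phi * s))"

lemma ellF_Fs: assumes "\<bar>k\<bar> < 1" "0 \<le> phi" shows "ellF phi k = Fs phi k"
proof (cases "phi = 0")
  case True then show ?thesis by (simp add: Fs_def)
next
  case False
  then have p: "0 < phi" using assms by simp
  have "(hk k has_integral ellF phi k) (cbox 0 phi)"
    using hk_int[OF assms(1)] by (simp add: ellF_hk integrable_integral)
  from has_integral_affinity[OF this, of phi 0] p
  have "((\<lambda>x. hk k (phi * x)) has_integral (1 / phi) * ellF phi k) {0..1}"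
    using image_scale01[OF p] by simp
  then have "integral {0..1} (\<lambda>s. hk k (phi * s)) = ellF phi k / phi"
    by (simp add: integral_unique)
  then show ?thesis using p by (simp add: Fs_def)
qed

lemma Fs_cont: "continuous_on (UNIV \<times> {-1<..<1}) (\<lambda>z. Fs (fst z) (snd z))"
proof -
  have c: "continuous_on ((UNIV \<times> {-1<..<1}) \<times> cbox 0 1)
      (\<lambda>(z, s). hk (snd z) (fst z * s))"
    unfolding split_beta
    by (rule hk_cont_comp) (auto intro!: continuous_intros)
  have "continuous_on (UNIV \<times> {-1<..<1}) (\<lambda>z. integral (cbox 0 1) (\<lambda>s. hk (snd z) (fst z * s)))"
    by (rule integral_continuous_on_param[OF c])
  then have "continuous_on (UNIV \<times> {-1<..<1}) (\<lambda>z. fst z * integral (cbox 0 1) (\<lambda>s. hk (snd z) (fst z * s)))"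
    by (intro continuous_intros)
  then show ?thesis by (simp add: Fs_def)
qed

lemma aux_div: "0 < (X::real) \<Longrightarrow> c + X = D \<Longrightarrow> 1 + c / X = D / X"
  by (simp add: field_simps)

lemma compl_alg:
  fixes k s c :: real
  assumes k: "0 \<le> k" "k < 1" and sc: "0 < s" "0 < c" "s\<^sup>2 + c\<^sup>2 = 1"
  defines "kp \<equiv> sqrt (1 - k\<^sup>2)" and "D \<equiv> sqrt (1 - k\<^sup>2 * s\<^sup>2)" and "y \<equiv> c / (sqrt (1 - k\<^sup>2) * s)"
  shows "1 / sqrt (1 - k\<^sup>2 * (y / sqrt (1 + y\<^sup>2))\<^sup>2) = D / kp"
    and "1 / D + (D / kp) * (inverse (1 + y\<^sup>2) * (- 1 / (kp * s\<^sup>2))) = 0"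
proof -
  have k2: "k\<^sup>2 < 1" using k by (simp add: abs_square_less_1)
  have kp2: "kp\<^sup>2 = 1 - k\<^sup>2" using k2 by (simp add: kp_def)
  have kpp: "0 < kp" using k2 by (simp add: kp_def)
  have s2: "s\<^sup>2 \<le> 1" using sc by (metis le_add_same_cancel1 zero_le_power2)
  have "k\<^sup>2 * s\<^sup>2 \<le> k\<^sup>2" using s2 by (simp add: mult_left_le)
  then have Dpos0: "0 < 1 - k\<^sup>2 * s\<^sup>2" using k2 by linarith
  have D2: "D\<^sup>2 = 1 - k\<^sup>2 * s\<^sup>2" using Dpos0 by (simp add: D_def)
  have Dp: "0 < D" using Dpos0 by (simp add: D_def)
  have y2: "y\<^sup>2 = c\<^sup>2 / (kp\<^sup>2 * s\<^sup>2)"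
    by (simp add: y_def kp_def[symmetric] power_divide power_mult_distrib)
  have "kp\<^sup>2 * s\<^sup>2 = s\<^sup>2 - k\<^sup>2 * s\<^sup>2" unfolding kp2 by (simp add: left_diff_distrib)
  then have sum: "kp\<^sup>2 * s\<^sup>2 + c\<^sup>2 = D\<^sup>2" using D2 sc(3) by linarith
  have ks: "0 < kp\<^sup>2 * s\<^sup>2" using kpp sc by simp
  have key: "1 + y\<^sup>2 = D\<^sup>2 / (kp\<^sup>2 * s\<^sup>2)"
    unfolding y2 using ks sum by (intro aux_div) (simp_all add: add.commute)
  have y1: "0 < 1 + y\<^sup>2" by (simp add: add_pos_nonneg)
  have "(y / sqrt (1 + y\<^sup>2))\<^sup>2 = y\<^sup>2 / (1 + y\<^sup>2)"
    using y1 by (simp add: power_divide)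
  also have "\<dots> = c\<^sup>2 / D\<^sup>2" unfolding key y2 using ks Dp sum kpp sc(1) by (simp add: field_simps add.commute)
  finally have sn: "(y / sqrt (1 + y\<^sup>2))\<^sup>2 = c\<^sup>2 / D\<^sup>2" .
  have "k\<^sup>2 * s\<^sup>2 + k\<^sup>2 * c\<^sup>2 = k\<^sup>2" using sc(3) by (metis distrib_left mult.right_neutral)
  then have "D\<^sup>2 - k\<^sup>2 * c\<^sup>2 = kp\<^sup>2" using D2 kp2 by linarith
  moreover have "1 - k\<^sup>2 * (c\<^sup>2 / D\<^sup>2) = (D\<^sup>2 - k\<^sup>2 * c\<^sup>2) / D\<^sup>2"
    using Dp by (simp add: diff_divide_distrib)
  ultimately have "1 - k\<^sup>2 * (y / sqrt (1 + y\<^sup>2))\<^sup>2 = (kp / D)\<^sup>2"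
    unfolding sn by (simp add: power_divide)
  then have "sqrt (1 - k\<^sup>2 * (y / sqrt (1 + y\<^sup>2))\<^sup>2) = kp / D"
    using kpp Dp by simp
  then show "1 / sqrt (1 - k\<^sup>2 * (y / sqrt (1 + y\<^sup>2))\<^sup>2) = D / kp" by simp
  have inv: "inverse (1 + y\<^sup>2) = kp\<^sup>2 * s\<^sup>2 / D\<^sup>2" unfolding key by simp
  show "1 / D + (D / kp) * (inverse (1 + y\<^sup>2) * (- 1 / (kp * s\<^sup>2))) = 0"
    unfolding inv using kpp sc Dp by (simp add: field_simps power2_eq_square)
qed

lemma arctan_nonneg: "0 \<le> y \<Longrightarrow> 0 \<le> arctan y"
  using arctan_le_iff[of 0 y] by simp

lemma arctan_pos: "0 < y \<Longrightarrow> 0 < arctan y"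
  using arctan_less_iff[of 0 y] by simp

lemma compl_ident:
  fixes k x :: real
  assumes k: "0 \<le> k" "k < 1" and x: "0 < x" "x \<le> pi/2"
  shows "ellF x k + ellF (arctan (cos x / (sqrt (1 - k\<^sup>2) * sin x))) k = ellK k"
proof -
  have kabs: "\<bar>k\<bar> < 1" using k by simp
  have k2: "k\<^sup>2 < 1" using kabs by (simp add: abs_square_less_1)
  have kpp: "0 < sqrt (1 - k\<^sup>2)" using k2 by simp
  define kp where "kp = sqrt (1 - k\<^sup>2)"
  define y where "y = (\<lambda>t. cos t / (kp * sin t))"
  define G where "G = (\<lambda>t. ellF t k + ellF (arctan (y t)) k)"
  show ?thesis
  proof (cases "x = pi/2")
    case True show ?thesis unfolding True by (simp add: ellK_def)
  next
    case False
    then have xl: "x < pi/2" using x by simp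
    have sinpos: "0 < sin t" if "x \<le> t" "t \<le> pi/2" for t
      using that x by (intro sin_gt_zero) auto
    have cont: "continuous_on {x..pi/2} G"
    proof -
      have c1: "continuous_on {x..pi/2} (\<lambda>t. ellF t k)"
        by (rule continuous_on_subset[OF ellF_cont[OF kabs, of "pi/2"]]) (use x in auto)
      have cy: "continuous_on {x..pi/2} y"
      proof -
        have nz: "sqrt (1 - k\<^sup>2) * sin t \<noteq> 0" if "t \<in> {x..pi/2}" for t
          using sinpos[of t] that kpp by auto
        have "kp \<noteq> 0" using kpp unfolding kp_def by simp
        then show ?thesis unfolding y_def using nz by (intro continuous_intros) auto
      qed
      have cay: "continuous_on {x..pi/2} (\<lambda>t. arctan (y t))"
        using cy by (rule continuous_on_arctan)
      have img: "(\<lambda>t. arctan (y t)) ` {x..pi/2} \<subseteq> {0..pi/2}"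
      proof
        fix z assume "z \<in> (\<lambda>t. arctan (y t)) ` {x..pi/2}"
        then obtain t where t: "x \<le> t" "t \<le> pi/2" "z = arctan (y t)" by auto
        have "0 \<le> cos t" using t x by (intro cos_ge_zero) auto
        then have "0 \<le> y t" unfolding y_def kp_def using sinpos[OF t(1,2)] kpp by simp
        then show "z \<in> {0..pi/2}" using t arctan_nonneg arctan_ubound[of "y t"] by auto
      qed
      have c2: "continuous_on {x..pi/2} (\<lambda>t. ellF (arctan (y t)) k)"
        using continuous_on_compose2[OF ellF_cont[OF kabs, of "pi/2"] cay img] .
      show ?thesis unfolding G_def using c1 c2 by (intro continuous_intros)
    qed
    have der: "DERIV G t :> 0" if t: "x < t" "t < pi/2" for t
    proof -
      have s: "0 < sin t" using t x by (intro sin_gt_zero) auto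
      have c: "0 < cos t" using t x by (intro cos_gt_zero) auto
      have sc: "(sin t)\<^sup>2 + (cos t)\<^sup>2 = 1" by simp
      have dy: "DERIV y t :> - 1 / (kp * (sin t)\<^sup>2)"
      proof -
        have dks: "DERIV (\<lambda>t. kp * sin t) t :> kp * cos t"
          by (intro DERIV_cmult DERIV_sin)
        have nz: "kp * sin t \<noteq> 0" using s kpp unfolding kp_def by simp
        have "DERIV y t :> ((- sin t) * (kp * sin t) - (kp * cos t) * cos t) / ((kp * sin t) ^ Suc (Suc 0))"
          unfolding y_def by (rule DERIV_quotient[OF DERIV_cos dks nz])
        moreover have "((- sin t) * (kp * sin t) - (kp * cos t) * cos t) / ((kp * sin t) ^ Suc (Suc 0))
            = - 1 / (kp * (sin t)\<^sup>2)"
        proof -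
          have "(- sin t) * (kp * sin t) - (kp * cos t) * cos t = - kp * ((sin t)\<^sup>2 + (cos t)\<^sup>2)"
            unfolding power2_eq_square by algebra
          then have e: "(- sin t) * (kp * sin t) - (kp * cos t) * cos t = - kp" using sc by simp
          have kp0: "kp \<noteq> 0" using kpp unfolding kp_def by simp
          show ?thesis unfolding e using s kp0 by (simp add: power2_eq_square field_simps)
        qed
        ultimately show ?thesis by simp
      qed
      have ypos: "0 < y t" unfolding y_def kp_def using s c kpp by simp
      have da: "DERIV (\<lambda>t. arctan (y t)) t :> inverse (1 + (y t)\<^sup>2) * (- 1 / (kp * (sin t)\<^sup>2))"
        by (rule DERIV_chain2[OF DERIV_arctan dy])
      have dF: "DERIV (\<lambda>t. ellF (arctan (y t)) k) t :>
          hk k (arctan (y t)) * (inverse (1 + (y t)\<^sup>2) * (- 1 / (kp * (sin t)\<^sup>2)))"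
        by (rule DERIV_chain2[OF ellF_deriv[OF kabs arctan_pos[OF ypos]] da])
      have dG: "DERIV G t :> hk k t + hk k (arctan (y t)) * (inverse (1 + (y t)\<^sup>2) * (- 1 / (kp * (sin t)\<^sup>2)))"
        unfolding G_def by (rule DERIV_add[OF ellF_deriv[OF kabs] dF]) (use t x in auto)
      have h1: "hk k (arctan (y t)) = sqrt (1 - k\<^sup>2 * (sin t)\<^sup>2) / kp"
        unfolding hk_def sin_arctan y_def using compl_alg(1)[OF k s c sc] by (simp add: kp_def)
      have h0: "hk k t = 1 / sqrt (1 - k\<^sup>2 * (sin t)\<^sup>2)" by (simp add: hk_def)
      have "hk k t + hk k (arctan (y t)) * (inverse (1 + (y t)\<^sup>2) * (- 1 / (kp * (sin t)\<^sup>2))) = 0"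
        unfolding h0 h1 using compl_alg(2)[OF k s c sc] unfolding y_def by (simp add: kp_def)
      with dG show ?thesis by simp
    qed
    have "G (pi/2) = G x" by (rule DERIV_isconst_end[OF xl cont der]) auto
    moreover have "G (pi/2) = ellK k" by (simp add: G_def y_def ellK_def)
    ultimately show ?thesis by (simp add: G_def y_def kp_def)
  qed
qed


lemma hk_nonneg: "\<bar>k\<bar> < 1 \<Longrightarrow> 0 \<le> hk k t"
  using hk_ge1[of k t] by simp

lemma K_strict_mono:
  fixes k1 k2 :: real
  assumes "0 \<le> k1" "k1 < k2" "k2 < 1"
  shows "ellK k1 < ellK k2"
proof -
  have a1: "\<bar>k1\<bar> < 1" "\<bar>k2\<bar> < 1" using assms by auto
  have "integral {0..pi/2} (hk k1) < integral {0..pi/2} (hk k2)"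
  proof (rule integral_less_real)
    show "continuous_on {0..pi/2} (hk k1)" "continuous_on {0..pi/2} (hk k2)"
      using a1 by (auto intro: cont_hk)
    show "{0<..<pi/2} \<noteq> {}" using pi_gt_zero by (simp add: not_le)
    fix t :: real assume t: "t \<in> {0<..<pi/2}"
    have s: "0 < sin t" using t by (intro sin_gt_zero) auto
    have "k1\<^sup>2 < k2\<^sup>2" using assms by (simp add: power_strict_mono)
    then have lt: "k1\<^sup>2 * (sin t)\<^sup>2 < k2\<^sup>2 * (sin t)\<^sup>2" using s by simp
    have p2: "0 < 1 - k2\<^sup>2 * (sin t)\<^sup>2" using den_pos[OF a1(2)] .
    have "sqrt (1 - k2\<^sup>2 * (sin t)\<^sup>2) < sqrt (1 - k1\<^sup>2 * (sin t)\<^sup>2)" using lt by simp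
    then show "hk k1 t < hk k2 t" unfolding hk_def using p2
      by (simp add: divide_strict_left_mono)
  qed
  then show ?thesis by (simp add: ellK_def ellF_hk)
qed

lemma N_mono:
  fixes e k1 k2 :: real
  assumes e: "0 < e" "e \<le> k1" and k: "k1 < k2" "k2 < 1"
  shows "ellF (arcsin (e / k2)) k2 \<le> ellF (arcsin (e / k1)) k1"
proof -
  have k1p: "0 < k1" using e by simp
  have a1: "\<bar>k1\<bar> < 1" "\<bar>k2\<bar> < 1" using e k by auto
  define c where "c = k1 / k2"
  have c: "0 < c" "c < 1" using k k1p by (auto simp: c_def)
  have ek1: "0 < e / k1" "e / k1 \<le> 1" using e k1p by auto
  define al where "al = arcsin (e / k1)"
  have al1: "0 < al" unfolding al_def using arcsin_less_mono[of 0 "e/k1"] ek1 by simp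
  have al2: "al \<le> pi/2" unfolding al_def using arcsin_ubound[of "e/k1"] ek1 by simp
  note al = al1 al2
  define P where "P = (\<lambda>x. ellF (arcsin (c * sin x)) k2 - ellF x k1)"
  have sinr: "0 \<le> sin x \<and> sin x \<le> 1" if "0 \<le> x" "x \<le> pi/2" for x
    using that by (auto intro: sin_ge_zero)
  have cont: "continuous_on {0..al} P"
  proof -
    have c1: "continuous_on {0..al} (\<lambda>x. ellF x k1)" by (rule ellF_cont[OF a1(1)])
    have rng: "\<forall>x\<in>{0..al}. - 1 \<le> c * sin x \<and> c * sin x \<le> 1"
    proof
      fix x assume "x \<in> {0..al}"
      then have "0 \<le> sin x \<and> sin x \<le> 1" using sinr[of x] al by auto
      then show "- 1 \<le> c * sin x \<and> c * sin x \<le> 1" using c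
        by (auto intro: mult_le_one order_trans[of _ 0])
    qed
    have ca: "continuous_on {0..al} (\<lambda>x. arcsin (c * sin x))"
      by (intro continuous_on_arcsin continuous_intros rng)
    have img: "(\<lambda>x. arcsin (c * sin x)) ` {0..al} \<subseteq> {0..pi/2}"
    proof
      fix z assume "z \<in> (\<lambda>x. arcsin (c * sin x)) ` {0..al}"
      then obtain x where x: "x \<in> {0..al}" "z = arcsin (c * sin x)" by auto
      have r: "0 \<le> c * sin x" "c * sin x \<le> 1" using rng x(1) sinr[of x] al x(1) c by auto
      have "0 \<le> arcsin (c * sin x)" using arcsin_le_mono[of 0 "c * sin x"] r by simp
      then show "z \<in> {0..pi/2}" using x r arcsin_ubound[of "c * sin x"] by auto
    qed
    have c2: "continuous_on {0..al} (\<lambda>x. ellF (arcsin (c * sin x)) k2)"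
      using continuous_on_compose2[OF ellF_cont[OF a1(2), of "pi/2"] ca img] .
    show ?thesis unfolding P_def using c1 c2 by (intro continuous_intros)
  qed
  have der: "DERIV P x :> hk k2 (arcsin (c * sin x)) * (inverse (sqrt (1 - (c * sin x)\<^sup>2)) * (c * cos x)) - hk k1 x"
    if x: "0 < x" "x < al" for x
  proof -
    have s: "0 < sin x" "sin x \<le> 1" using x al by (auto intro: sin_gt_zero)
    have cs: "0 < c * sin x" "c * sin x < 1" using s c by (auto intro: mult_less_le_imp_less[of c 1 "sin x" 1, simplified])
    have d1: "DERIV (\<lambda>x. arcsin (c * sin x)) x :> inverse (sqrt (1 - (c * sin x)\<^sup>2)) * (c * cos x)"
      by (rule DERIV_chain2[OF DERIV_arcsin DERIV_cmult[OF DERIV_sin]]) (use cs in auto)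
    have ap: "0 < arcsin (c * sin x)" using arcsin_less_mono[of 0 "c * sin x"] cs by simp
    have d2: "DERIV (\<lambda>x. ellF (arcsin (c * sin x)) k2) x :> hk k2 (arcsin (c * sin x)) * (inverse (sqrt (1 - (c * sin x)\<^sup>2)) * (c * cos x))"
      by (rule DERIV_chain2[OF ellF_deriv[OF a1(2) ap] d1])
    show ?thesis unfolding P_def by (rule DERIV_diff[OF d2 ellF_deriv[OF a1(1)]]) (use x in auto)
  qed
  have derle: "hk k2 (arcsin (c * sin x)) * (inverse (sqrt (1 - (c * sin x)\<^sup>2)) * (c * cos x)) - hk k1 x \<le> 0"
    if x: "0 < x" "x < al" for x
  proof -
    have s: "0 < sin x" "sin x \<le> 1" using x al by (auto intro: sin_gt_zero)
    have cs: "0 < c * sin x" "c * sin x < 1" using s c by (auto intro: mult_less_le_imp_less[of c 1 "sin x" 1, simplified])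
    have "k2 * c = k1" using k k1p by (simp add: c_def)
    then have "k2\<^sup>2 * (c * sin x)\<^sup>2 = k1\<^sup>2 * (sin x)\<^sup>2" by (metis mult.assoc power_mult_distrib)
    then have h: "hk k2 (arcsin (c * sin x)) = hk k1 x" unfolding hk_def using cs by simp
    have cc: "0 \<le> cos x" using x al by (intro cos_ge_zero) auto
    have "(c * cos x)\<^sup>2 \<le> 1 - (c * sin x)\<^sup>2"
    proof -
      have "(c * cos x)\<^sup>2 + (c * sin x)\<^sup>2 = c\<^sup>2 * ((sin x)\<^sup>2 + (cos x)\<^sup>2)"
        unfolding power2_eq_square by algebra
      also have "\<dots> = c\<^sup>2" by simp
      also have "\<dots> \<le> 1" using c by (simp add: power_le_one)
      finally show ?thesis by simp
    qed
    then have le: "c * cos x \<le> sqrt (1 - (c * sin x)\<^sup>2)" by (rule real_le_rsqrt)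
    have pos: "0 < sqrt (1 - (c * sin x)\<^sup>2)"
    proof -
      have "(c * sin x)\<^sup>2 < 1" using cs by (simp add: abs_square_less_1)
      then show ?thesis by simp
    qed
    have "inverse (sqrt (1 - (c * sin x)\<^sup>2)) * (c * cos x) \<le> 1"
      using le pos by (simp add: field_simps)
    moreover have "0 \<le> hk k1 x" by (rule hk_nonneg[OF a1(1)])
    ultimately have "hk k1 x * (inverse (sqrt (1 - (c * sin x)\<^sup>2)) * (c * cos x)) \<le> hk k1 x"
      by (simp add: mult_left_le)
    then show ?thesis using h by simp
  qed
  obtain l z where lz: "0 < z" "z < al" "DERIV P z :> l" "P al - P 0 = (al - 0) * l"
    using MVT[OF al(1) cont] der real_differentiable_def by blast
  have "l \<le> 0" using DERIV_unique[OF lz(3) der[OF lz(1,2)]] derle[OF lz(1,2)] by simp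
  then have "al * l \<le> 0" using al(1) by (simp add: mult_nonneg_nonpos)
  then have "P al \<le> P 0" using lz(4) by simp
  moreover have "P 0 = 0" unfolding P_def by simp
  moreover have "c * sin al = e / k2" unfolding al_def using ek1 k1p k by (simp add: c_def)
  ultimately show ?thesis unfolding P_def al_def by simp
qed


lemma gen_alg1: fixes A B L :: real assumes "0 < L" "L < B" "B < A"
  shows "((B - L) / B) / (((B - L) / (A - L)) * (L / B)) = (A - L) / L"
proof -
  have "B - L \<noteq> 0" "A - L \<noteq> 0" "B \<noteq> 0" "L \<noteq> 0" using assms by auto
  then show ?thesis by (simp add: field_simps)
qed

lemma gen_alg2: fixes A B L :: real assumes "0 < L" "L < B" "B < A"
  shows "(A - L) / A = (1 - B / A) / ((A - B) / (A - L))"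
proof -
  have "A - B \<noteq> 0" "A - L \<noteq> 0" "A \<noteq> 0" using assms by auto
  then show ?thesis by (simp add: field_simps)
qed

lemma ell_alg:
  fixes a b l k2 Y :: real
  assumes "0 < l" "l < b" "b < a"
    and k2: "k2 = (a\<^sup>2 - b\<^sup>2) / (a\<^sup>2 - l\<^sup>2)"
    and Y: "Y = (1 - (l / b)\<^sup>2) / ((1 - k2) * (l / b)\<^sup>2)"
  shows "Y / (1 + Y) = (1 - b\<^sup>2 / a\<^sup>2) / k2"
proof -
  have lb: "l\<^sup>2 < b\<^sup>2" using assms by (simp add: power_strict_mono)
  have ba: "b\<^sup>2 < a\<^sup>2" using assms by (simp add: power_strict_mono)
  have b0: "0 < b" "0 < a" using assms by auto
  have l2: "0 < l\<^sup>2" using assms by simp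
  have al: "0 < a\<^sup>2 - l\<^sup>2" "0 < a\<^sup>2 - b\<^sup>2" "0 < b\<^sup>2 - l\<^sup>2" using lb ba by auto
  have k2': "1 - k2 = (b\<^sup>2 - l\<^sup>2) / (a\<^sup>2 - l\<^sup>2)" unfolding k2 using al by (simp add: field_simps)
  have c2: "1 - l\<^sup>2 / b\<^sup>2 = (b\<^sup>2 - l\<^sup>2) / b\<^sup>2" using b0 by (simp add: field_simps)
  have Y': "Y = (a\<^sup>2 - l\<^sup>2) / l\<^sup>2" unfolding Y k2' power_divide c2
    by (rule gen_alg1[OF l2 lb ba])
  have "Y / (1 + Y) = (a\<^sup>2 - l\<^sup>2) / a\<^sup>2" unfolding Y' using al b0 l2
    by (simp add: field_simps)
  also have "\<dots> = (1 - b\<^sup>2 / a\<^sup>2) / k2" unfolding k2 by (rule gen_alg2[OF l2 lb ba])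
  finally show ?thesis .
qed
lemma kl_facts:
  fixes a b l :: real
  assumes "0 < b" "b < a" "0 \<le> l" "l < b"
  shows "(k_lam a b l)\<^sup>2 = (a\<^sup>2 - b\<^sup>2) / (a\<^sup>2 - l\<^sup>2)" "0 < k_lam a b l" "k_lam a b l < 1"
proof -
  have lb: "l\<^sup>2 < b\<^sup>2" using assms by (simp add: power_strict_mono)
  have ba: "b\<^sup>2 < a\<^sup>2" using assms by (simp add: power_strict_mono)
  have q: "0 < (a\<^sup>2 - b\<^sup>2) / (a\<^sup>2 - l\<^sup>2)" using lb ba by simp
  have q1: "(a\<^sup>2 - b\<^sup>2) / (a\<^sup>2 - l\<^sup>2) < 1" using lb ba by simp
  show "(k_lam a b l)\<^sup>2 = (a\<^sup>2 - b\<^sup>2) / (a\<^sup>2 - l\<^sup>2)" unfolding k_lam_def using q by simp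
  show "0 < k_lam a b l" unfolding k_lam_def using q by simp
  show "k_lam a b l < 1" unfolding k_lam_def using q q1 by simp
qed

lemma kl_0:
  fixes a b :: real
  assumes "0 < b" "b < a"
  shows "k_lam a b 0 = sqrt (1 - b\<^sup>2 / a\<^sup>2)"
proof -
  have "(a\<^sup>2 - b\<^sup>2) / (a\<^sup>2 - 0\<^sup>2) = 1 - b\<^sup>2 / a\<^sup>2" using assms by (simp add: field_simps)
  then show ?thesis unfolding k_lam_def by simp
qed

lemma kl_mono:
  fixes a b l1 l2 :: real
  assumes "0 < b" "b < a" "0 \<le> l1" "l1 < l2" "l2 < b"
  shows "k_lam a b l1 < k_lam a b l2"
proof -
  have l12: "l1\<^sup>2 < l2\<^sup>2" using assms by (simp add: power_strict_mono)
  have lb: "l2\<^sup>2 < b\<^sup>2" using assms by (simp add: power_strict_mono)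
  have ba: "b\<^sup>2 < a\<^sup>2" using assms by (simp add: power_strict_mono)
  have "(a\<^sup>2 - b\<^sup>2) / (a\<^sup>2 - l1\<^sup>2) < (a\<^sup>2 - b\<^sup>2) / (a\<^sup>2 - l2\<^sup>2)"
    using l12 lb ba by (intro divide_strict_left_mono) auto
  then show ?thesis unfolding k_lam_def by simp
qed

lemma e_facts:
  fixes a b :: real
  assumes "0 < b" "b < a"
  shows "0 < sqrt (1 - b\<^sup>2 / a\<^sup>2)" "sqrt (1 - b\<^sup>2 / a\<^sup>2) < 1"
    "(sqrt (1 - b\<^sup>2 / a\<^sup>2))\<^sup>2 = 1 - b\<^sup>2 / a\<^sup>2"
proof -
  have ba: "b\<^sup>2 < a\<^sup>2" using assms by (simp add: power_strict_mono)
  have q: "0 < 1 - b\<^sup>2 / a\<^sup>2" using ba assms by simp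
  have q1: "1 - b\<^sup>2 / a\<^sup>2 < 1" using assms by simp
  show "0 < sqrt (1 - b\<^sup>2 / a\<^sup>2)" using q by simp
  show "sqrt (1 - b\<^sup>2 / a\<^sup>2) < 1" using q q1 by simp
  show "(sqrt (1 - b\<^sup>2 / a\<^sup>2))\<^sup>2 = 1 - b\<^sup>2 / a\<^sup>2" using q by simp
qed

lemma kl_gt_e:
  fixes a b l :: real
  assumes "0 < b" "b < a" "0 < l" "l < b"
  shows "sqrt (1 - b\<^sup>2 / a\<^sup>2) < k_lam a b l"
  using kl_mono[of b a 0 l] kl_0[of b a] assms by simp

lemma omega_compl:
  fixes a b l :: real
  assumes ab: "0 < b" "b < a" and l: "0 < l" "l < b"
  defines "k \<equiv> k_lam a b l" and "e \<equiv> sqrt (1 - b\<^sup>2 / a\<^sup>2)"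
  shows "omega_lam a b l = (ellK k - ellF (arcsin (e / k)) k) / (2 * ellK k)"
proof -
  have kf: "k\<^sup>2 = (a\<^sup>2 - b\<^sup>2) / (a\<^sup>2 - l\<^sup>2)" "0 < k" "k < 1"
    using kl_facts[of b a l] ab l by (auto simp: k_def)
  have ef: "0 < e" "e < 1" "e\<^sup>2 = 1 - b\<^sup>2 / a\<^sup>2" using e_facts[OF ab] by (auto simp: e_def)
  have ek: "e < k" using kl_gt_e[OF ab l] by (simp add: k_def e_def)
  have lb: "0 < l / b" "l / b < 1" using ab l by auto
  define phi where "phi = arcsin (l / b)"
  have sphi: "sin phi = l / b" unfolding phi_def using lb by simp
  have cphi: "cos phi = sqrt (1 - (l / b)\<^sup>2)" unfolding phi_def using lb by (simp add: cos_arcsin)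
  have phi1: "0 < phi" unfolding phi_def using arcsin_less_mono[of 0 "l/b"] lb by simp
  have phi2: "phi \<le> pi/2" unfolding phi_def using arcsin_ubound[of "l/b"] lb by simp
  have CI: "ellF phi k + ellF (arctan (cos phi / (sqrt (1 - k\<^sup>2) * sin phi))) k = ellK k"
    by (rule compl_ident) (use kf phi1 phi2 in auto)
  define y where "y = cos phi / (sqrt (1 - k\<^sup>2) * sin phi)"
  have k2: "k\<^sup>2 < 1" using kf(2,3) by (simp add: abs_square_less_1)
  have cpos: "0 < cos phi" unfolding cphi using lb by (simp add: abs_square_less_1)
  have ypos: "0 < y" unfolding y_def using cpos sphi lb k2 by (intro divide_pos_pos mult_pos_pos) auto
  have y2: "y\<^sup>2 = (1 - (l / b)\<^sup>2) / ((1 - k\<^sup>2) * (l / b)\<^sup>2)"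
  proof -
    have "(cos phi)\<^sup>2 = 1 - (l / b)\<^sup>2" unfolding cphi using lb by (simp add: abs_square_less_1 less_imp_le)
    moreover have "(sqrt (1 - k\<^sup>2))\<^sup>2 = 1 - k\<^sup>2" using k2 by simp
    ultimately show ?thesis unfolding y_def sphi by (simp add: power_divide power_mult_distrib)
  qed
  have "y\<^sup>2 / (1 + y\<^sup>2) = (1 - b\<^sup>2 / a\<^sup>2) / k\<^sup>2"
    by (rule ell_alg[OF l ab(2) kf(1) y2])
  moreover have "(sin (arctan y))\<^sup>2 = y\<^sup>2 / (1 + y\<^sup>2)"
    unfolding sin_arctan by (simp add: power_divide add_pos_nonneg)
  ultimately have "(sin (arctan y))\<^sup>2 = (e / k)\<^sup>2" using ef by (simp add: power_divide)
  moreover have "0 \<le> sin (arctan y)" unfolding sin_arctan using ypos by simp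
  moreover have "0 \<le> e / k" using ef kf by simp
  ultimately have "sin (arctan y) = e / k" by (rule power2_eq_imp_eq)
  then have "arcsin (e / k) = arctan y"
    using arcsin_sin[of "arctan y"] arctan_bounded[of y] by auto
  then have "ellF phi k = ellK k - ellF (arcsin (e / k)) k" using CI unfolding y_def by simp
  then show ?thesis unfolding omega_lam_def phi_def k_def by simp
qed


lemma ellK_pos: "\<bar>k\<bar> < 1 \<Longrightarrow> 0 < ellK k"
  using ellK_ge[of k] pi_gt_zero by linarith

lemma half_form: "K \<noteq> 0 \<Longrightarrow> (K - N) / (2 * K) = 1/2 - (N / K) / 2" for K N :: real
  by (simp add: field_simps)

lemma omega_mono:
  fixes a b l1 l2 :: real
  assumes ab: "0 < b" "b < a" and l: "0 < l1" "l1 < l2" "l2 < b"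
  shows "omega_lam a b l1 < omega_lam a b l2"
proof -
  define e where "e = sqrt (1 - b\<^sup>2 / a\<^sup>2)"
  define k1 where "k1 = k_lam a b l1"
  define k2 where "k2 = k_lam a b l2"
  have ef: "0 < e" "e < 1" using e_facts[OF ab] by (auto simp: e_def)
  have k1f: "0 < k1" "k1 < 1" using kl_facts[of b a l1] ab l by (auto simp: k1_def)
  have k2f: "0 < k2" "k2 < 1" using kl_facts[of b a l2] ab l by (auto simp: k2_def)
  have ek1: "e < k1" using kl_gt_e[of b a l1] ab l by (simp add: e_def k1_def)
  have k12: "k1 < k2" using kl_mono[of b a l1 l2] ab l by (simp add: k1_def k2_def)
  have w1: "omega_lam a b l1 = (ellK k1 - ellF (arcsin (e / k1)) k1) / (2 * ellK k1)"
    using omega_compl[of b a l1] ab l by (simp add: e_def k1_def)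
  have w2: "omega_lam a b l2 = (ellK k2 - ellF (arcsin (e / k2)) k2) / (2 * ellK k2)"
    using omega_compl[of b a l2] ab l by (simp add: e_def k2_def)
  define N1 where "N1 = ellF (arcsin (e / k1)) k1"
  define N2 where "N2 = ellF (arcsin (e / k2)) k2"
  define K1 where "K1 = ellK k1"
  define K2 where "K2 = ellK k2"
  have NN: "N2 \<le> N1" unfolding N1_def N2_def by (rule N_mono) (use ef ek1 k12 k2f in auto)
  have KK: "K1 < K2" unfolding K1_def K2_def by (rule K_strict_mono) (use k1f k12 k2f in auto)
  have K1p: "0 < K1" unfolding K1_def by (rule ellK_pos) (use k1f in auto)
  have N1p: "0 < N1"
  proof -
    have "0 < arcsin (e / k1)" using arcsin_less_mono[of 0 "e/k1"] ef k1f ek1 by simp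
    moreover have "arcsin (e / k1) \<le> N1" unfolding N1_def
      by (rule ellF_ge) (use k1f calculation in auto)
    ultimately show ?thesis by simp
  qed
  have N2p: "0 \<le> N2"
  proof -
    have "0 \<le> arcsin (e / k2)" using arcsin_le_mono[of 0 "e/k2"] ef k2f ek1 k12 by simp
    moreover have "arcsin (e / k2) \<le> N2" unfolding N2_def
      by (rule ellF_ge) (use k2f calculation in auto)
    ultimately show ?thesis by simp
  qed
  have "N2 / K2 \<le> N1 / K2" using NN K1p KK by (simp add: divide_right_mono)
  also have "\<dots> < N1 / K1" using N1p K1p KK by (simp add: divide_strict_left_mono)
  finally have "N2 / K2 < N1 / K1" .
  moreover have "omega_lam a b l1 = 1/2 - (N1 / K1) / 2"
    unfolding w1 N1_def[symmetric] K1_def[symmetric] using K1p by (simp add: half_form)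
  moreover have "omega_lam a b l2 = 1/2 - (N2 / K2) / 2"
    unfolding w2 N2_def[symmetric] K2_def[symmetric] using K1p KK by (simp add: half_form)
  ultimately show ?thesis by simp
qed

lemma omega_0:
  assumes "0 < b"
  shows "omega_lam a b 0 = 0"
  unfolding omega_lam_def by simp

lemma kl_cont:
  fixes a b :: real
  assumes "0 < b" "b < a"
  shows "continuous_on {0..<b} (k_lam a b)"
proof -
  have "a\<^sup>2 - l\<^sup>2 \<noteq> 0" if "l \<in> {0..<b}" for l
  proof -
    have "l\<^sup>2 < a\<^sup>2" using that assms by (auto intro: power_strict_mono)
    then show ?thesis by simp
  qed
  then have "continuous_on {0..<b} (\<lambda>l. sqrt ((a\<^sup>2 - b\<^sup>2) / (a\<^sup>2 - l\<^sup>2)))"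
    by (intro continuous_intros) auto
  then show ?thesis unfolding k_lam_def[abs_def] by simp
qed

lemma omega_cont:
  fixes a b :: real
  assumes ab: "0 < b" "b < a"
  shows "continuous_on {0..<b} (omega_lam a b)"
proof -
  have kr: "\<bar>k_lam a b l\<bar> < 1" if "l \<in> {0..<b}" for l
    using kl_facts[of b a l] ab that by auto
  have ar: "- 1 \<le> l / b \<and> l / b \<le> 1" if "l \<in> {0..<b}" for l
  proof -
    have "0 \<le> l / b" using that ab by simp
    moreover have "l / b \<le> 1" using that ab by simp
    ultimately show ?thesis by linarith
  qed
  have a0: "0 \<le> arcsin (l / b)" if "l \<in> {0..<b}" for l
    using arcsin_le_mono[of 0 "l/b"] ar[OF that] that ab by simp
  have kr2: "- 1 < k_lam a b l \<and> k_lam a b l < 1" if "l \<in> {0..<b}" for l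
    using kr[OF that] by auto
  have ck: "continuous_on {0..<b} (k_lam a b)" by (rule kl_cont[OF ab])
  have ca: "continuous_on {0..<b} (\<lambda>l. arcsin (l / b))"
    using ar by (intro continuous_on_arcsin continuous_intros) auto
  have c1: "continuous_on {0..<b} (\<lambda>l. Fs (fst (arcsin (l / b), k_lam a b l)) (snd (arcsin (l / b), k_lam a b l)))"
    by (rule continuous_on_compose2[OF Fs_cont, where f = "\<lambda>l. (arcsin (l / b), k_lam a b l)"])
       (use ca ck kr2 in \<open>auto intro!: continuous_intros\<close>)
  have c2: "continuous_on {0..<b} (\<lambda>l. Fs (fst (pi / 2, k_lam a b l)) (snd (pi / 2, k_lam a b l)))"
    by (rule continuous_on_compose2[OF Fs_cont, where f = "\<lambda>l. (pi / 2, k_lam a b l)"])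
       (use ck kr2 in \<open>auto intro!: continuous_intros\<close>)
  have nz: "2 * Fs (pi / 2) (k_lam a b l) \<noteq> 0" if "l \<in> {0..<b}" for l
  proof -
    have "Fs (pi / 2) (k_lam a b l) = ellK (k_lam a b l)"
      unfolding ellK_def by (rule ellF_Fs[symmetric]) (use kr[OF that] in auto)
    then show ?thesis using ellK_pos[OF kr[OF that]] by simp
  qed
  have c3: "continuous_on {0..<b} (\<lambda>l. Fs (arcsin (l / b)) (k_lam a b l) / (2 * Fs (pi / 2) (k_lam a b l)))"
    using c1 c2 nz by (auto intro!: continuous_intros)
  show ?thesis
  proof (rule continuous_on_eq[OF c3])
    fix l assume l: "l \<in> {0..<b}"
    show "Fs (arcsin (l / b)) (k_lam a b l) / (2 * Fs (pi / 2) (k_lam a b l)) = omega_lam a b l"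
      unfolding omega_lam_def ellK_def using ellF_Fs kr[OF l] a0[OF l] by simp
  qed
qed


lemma artanh_nonneg: assumes "0 \<le> k" "k < (1::real)" shows "0 \<le> artanh k"
proof -
  have "1 \<le> (1 + k) / (1 - k)" using assms by (simp add: field_simps)
  then have "0 \<le> ln ((1 + k) / (1 - k))" by simp
  then show ?thesis by (simp add: artanh_def)
qed

lemma K_lower:
  fixes k :: real
  assumes k: "0 < k" "k < 1"
  shows "artanh k \<le> ellK k"
proof -
  have kabs: "\<bar>k\<bar> < 1" using k by simp
  define f where "f = (\<lambda>t. cos t / (1 - k\<^sup>2 * (sin t)\<^sup>2))"
  define A where "A = (\<lambda>t. artanh (k * sin t) / k)"
  have dA: "(A has_vector_derivative f x) (at x within {0..pi/2})" for x
  proof -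
    have ks: "\<bar>k * sin x\<bar> < 1"
    proof -
      have "\<bar>k * sin x\<bar> = k * \<bar>sin x\<bar>" using k by (simp add: abs_mult)
      also have "\<dots> \<le> k" using k abs_sin_le_one[of x] by (simp add: mult_left_le)
      finally show ?thesis using k by simp
    qed
    have "DERIV (\<lambda>t. artanh (k * sin t)) x :> 1 / (1 - (k * sin x)\<^sup>2) * (k * cos x)"
      by (rule DERIV_chain2[OF artanh_real_has_field_derivative[OF ks] DERIV_cmult[OF DERIV_sin]])
    then have "DERIV A x :> 1 / (1 - (k * sin x)\<^sup>2) * (k * cos x) / k"
      unfolding A_def by (rule DERIV_cdivide)
    moreover have "1 / (1 - (k * sin x)\<^sup>2) * (k * cos x) / k = f x"
      unfolding f_def using k by (simp add: power_mult_distrib)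
    ultimately have "DERIV A x :> f x" by simp
    then have "(A has_real_derivative f x) (at x within {0..pi/2})"
      by (rule has_field_derivative_at_within)
    then show ?thesis by (simp add: has_real_derivative_iff_has_vector_derivative)
  qed
  have "(f has_integral (A (pi/2) - A 0)) {0..pi/2}"
    by (rule fundamental_theorem_of_calculus) (use dA in auto)
  then have fi: "(f has_integral (artanh k / k)) {0..pi/2}" by (simp add: A_def)
  have "integral {0..pi/2} f \<le> integral {0..pi/2} (hk k)"
  proof (rule integral_le)
    show "f integrable_on {0..pi/2}" using fi by blast
    show "hk k integrable_on {0..pi/2}" by (rule hk_int[OF kabs])
    fix x assume x: "x \<in> {0..pi/2}"
    define u where "u = 1 - k\<^sup>2 * (sin x)\<^sup>2"
    have up: "0 < u" unfolding u_def by (rule den_pos[OF kabs])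
    have c0: "0 \<le> cos x" using x by (intro cos_ge_zero) auto
    have "(cos x)\<^sup>2 \<le> u"
    proof -
      have "k\<^sup>2 \<le> 1" using k by (simp add: power_le_one)
      then have "k\<^sup>2 * (sin x)\<^sup>2 \<le> (sin x)\<^sup>2" by (simp add: mult_left_le_one_le)
      then show ?thesis unfolding u_def using sin_cos_squared_add[of x] by linarith
    qed
    then have cu: "cos x \<le> sqrt u" by (rule real_le_rsqrt)
    have "cos x / u \<le> sqrt u / u" using cu up by (simp add: divide_right_mono)
    also have "\<dots> = 1 / sqrt u" using up by (simp add: field_simps real_div_sqrt)
    finally show "f x \<le> hk k x" unfolding f_def hk_def u_def .
  qed
  then have "artanh k / k \<le> ellK k" using fi by (simp add: integral_unique ellK_def ellF_hk)
  moreover have "artanh k \<le> artanh k / k"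
    using artanh_nonneg[of k] k by (simp add: le_divide_eq mult_left_le)
  ultimately show ?thesis by simp
qed

lemma omega_big:
  fixes a b :: real
  assumes ab: "0 < b" "b < a"
  shows "\<exists>l. 0 < l \<and> l < b \<and> 1/3 < omega_lam a b l"
proof -
  define e where "e = sqrt (1 - b\<^sup>2 / a\<^sup>2)"
  have ef: "0 < e" "e < 1" "e\<^sup>2 = 1 - b\<^sup>2 / a\<^sup>2" using e_facts[OF ab] by (auto simp: e_def)
  define Ke where "Ke = ellK e"
  have Kep: "0 < Ke" unfolding Ke_def by (rule ellK_pos) (use ef in auto)
  define M where "M = 3 * Ke + 1"
  define kt where "kt = tanh M"
  have kt: "0 < kt" "kt < 1" unfolding kt_def M_def using Kep tanh_real_pos_iff tanh_real_lt_1 by auto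
  define k where "k = max kt ((1 + e) / 2)"
  have kf1: "kt \<le> k" "(1 + e) / 2 \<le> k" by (simp_all add: k_def)
  have kf2: "k < 1" using kt ef by (simp add: k_def)
  have kf: "e < k" "k < 1" "kt \<le> k" "0 < k" using kf1 kf2 ef kt by auto
  have "M \<le> ellK kt" using K_lower[OF kt] by (simp add: kt_def artanh_tanh_real)
  also have "ellK kt \<le> ellK k"
  proof (cases "kt = k")
    case False then show ?thesis using K_strict_mono[of kt k] kt kf by simp
  qed simp
  finally have KM: "M \<le> ellK k" .
  define L where "L = a\<^sup>2 - (a\<^sup>2 - b\<^sup>2) / k\<^sup>2"
  have ba: "b\<^sup>2 < a\<^sup>2" using ab by (simp add: power_strict_mono)
  have a0: "0 < a\<^sup>2" using ab by simp
  have k2: "0 < k\<^sup>2" "k\<^sup>2 < 1" using kf by (auto simp: abs_square_less_1)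
  have ek2: "e\<^sup>2 < k\<^sup>2" using power_strict_mono[of e k 2] kf ef(1) by simp
  have L0: "0 < L"
  proof -
    have "(a\<^sup>2 - b\<^sup>2) / a\<^sup>2 < k\<^sup>2" using ek2 ef a0 by (simp add: diff_divide_distrib)
    then have "a\<^sup>2 - b\<^sup>2 < k\<^sup>2 * a\<^sup>2" using a0 by (simp add: divide_less_eq)
    then have "(a\<^sup>2 - b\<^sup>2) / k\<^sup>2 < a\<^sup>2" using k2 by (simp add: divide_less_eq mult.commute)
    then show ?thesis unfolding L_def by simp
  qed
  have Lb: "L < b\<^sup>2"
  proof -
    have "(a\<^sup>2 - b\<^sup>2) * k\<^sup>2 < a\<^sup>2 - b\<^sup>2" using k2 ba by (simp add: mult_less_cancel_left1)
    then have "a\<^sup>2 - b\<^sup>2 < (a\<^sup>2 - b\<^sup>2) / k\<^sup>2" using k2 by (simp add: less_divide_eq)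
    then show ?thesis unfolding L_def by simp
  qed
  define l where "l = sqrt L"
  have l: "0 < l" "l < b" unfolding l_def using L0 Lb ab real_sqrt_less_mono[OF Lb] by auto
  have l2: "l\<^sup>2 = L" unfolding l_def using L0 by simp
  have kl: "k_lam a b l = k"
  proof -
    have "a\<^sup>2 - l\<^sup>2 = (a\<^sup>2 - b\<^sup>2) / k\<^sup>2" unfolding l2 L_def by simp
    then have "(a\<^sup>2 - b\<^sup>2) / (a\<^sup>2 - l\<^sup>2) = k\<^sup>2" using ba k2 by simp
    then show ?thesis unfolding k_lam_def using kf by simp
  qed
  have w: "omega_lam a b l = (ellK k - ellF (arcsin (e / k)) k) / (2 * ellK k)"
    using omega_compl[OF ab l] by (simp add: kl e_def)
  have NK: "ellF (arcsin (e / k)) k \<le> Ke"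
    using N_mono[of e e k] ef kf by (simp add: Ke_def ellK_def)
  have Kp: "0 < ellK k" using KM Kep M_def by simp
  have "Ke / ellK k < 1/3"
  proof -
    have "3 * Ke < ellK k" using KM M_def by simp
    then show ?thesis using Kp by (simp add: divide_less_eq)
  qed
  moreover have "ellF (arcsin (e / k)) k / ellK k \<le> Ke / ellK k"
    using NK Kp by (simp add: divide_right_mono)
  moreover have "omega_lam a b l = 1/2 - (ellF (arcsin (e / k)) k / ellK k) / 2"
    unfolding w using Kp by (simp add: half_form)
  ultimately have "1/3 < omega_lam a b l"
  proof -
    fix X Y :: real
    have gen: "\<And>X Y w :: real. Y < 1/3 \<Longrightarrow> X \<le> Y \<Longrightarrow> w = 1/2 - X/2 \<Longrightarrow> 1/3 < w" by linarith
    show "Ke / ellK k < 1/3 \<Longrightarrow> ellF (arcsin (e / k)) k / ellK k \<le> Ke / ellK k \<Longrightarrow>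
      omega_lam a b l = 1/2 - (ellF (arcsin (e / k)) k / ellK k) / 2 \<Longrightarrow> 1/3 < omega_lam a b l"
      by (rule gen)
  qed
  then show ?thesis using l by blast
qed

lemma lam_q_props:
  fixes a b :: real and q :: nat
  assumes ab: "0 < b" "b < a" and q: "3 \<le> q"
  shows "0 < lam_q a b q \<and> lam_q a b q < b \<and> omega_lam a b (lam_q a b q) = 1 / real q"
proof -
  let ?P = "\<lambda>l. 0 < l \<and> l < b \<and> omega_lam a b l = 1 / real q"
  have q3: "1 / real q \<le> 1/3" using q by (simp add: divide_le_eq)
  have qp: "0 < 1 / real q" using q by simp
  obtain l2 where l2: "0 < l2" "l2 < b" "1/3 < omega_lam a b l2" using omega_big[OF ab] by blast
  have cont: "continuous_on {0..l2} (omega_lam a b)"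
    by (rule continuous_on_subset[OF omega_cont[OF ab]]) (use l2 in auto)
  obtain l where l: "0 \<le> l" "l \<le> l2" "omega_lam a b l = 1 / real q"
    using IVT'[of "omega_lam a b" 0 "1 / real q" l2] omega_0[OF ab(1), of a] qp q3 l2 cont by auto
  have "l \<noteq> 0" using l(3) omega_0[OF ab(1), of a] qp by auto
  then have ex: "?P l" using l l2 by auto
  have uniq: "y = l" if "?P y" for y
  proof (rule ccontr)
    assume "y \<noteq> l"
    then consider "y < l" | "l < y" by linarith
    then show False
    proof cases
      case 1
      have "omega_lam a b y < omega_lam a b l" by (rule omega_mono[OF ab]) (use that ex 1 in auto)
      then show False using that ex by linarith
    next
      case 2
      have "omega_lam a b l < omega_lam a b y" by (rule omega_mono[OF ab]) (use that ex 2 in auto)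
      then show False using that ex by linarith
    qed
  qed
  have "?P (THE l. ?P l)" by (rule theI[of ?P l, OF ex uniq])
  then show ?thesis unfolding lam_q_def .
qed

lemma lam_q_anti:
  fixes a b :: real and j m :: nat
  assumes ab: "0 < b" "b < a" and jm: "3 \<le> j" "j < m"
  shows "lam_q a b m < lam_q a b j"
proof (rule ccontr)
  assume "\<not> lam_q a b m < lam_q a b j"
  then have le: "lam_q a b j \<le> lam_q a b m" by simp
  have pj: "0 < lam_q a b j \<and> lam_q a b j < b \<and> omega_lam a b (lam_q a b j) = 1 / real j"
    by (rule lam_q_props[OF ab jm(1)])
  have pm: "0 < lam_q a b m \<and> lam_q a b m < b \<and> omega_lam a b (lam_q a b m) = 1 / real m"
    by (rule lam_q_props[OF ab]) (use jm in simp)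
  have rj: "real j < real m" "0 < real j" using jm by auto
  have lt: "1 / real m < 1 / real j" by (rule frac_less2[OF zero_less_one order_refl rj(2) rj(1)])
  have wj: "omega_lam a b (lam_q a b j) = 1 / real j" using pj by blast
  have wm: "omega_lam a b (lam_q a b m) = 1 / real m" using pm by blast
  have ge: "1 / real j \<le> 1 / real m"
  proof (cases "lam_q a b j = lam_q a b m")
    case True then show ?thesis using wj wm by (metis order_refl)
  next
    case False
    then have "lam_q a b j < lam_q a b m" using le by simp
    then have "omega_lam a b (lam_q a b j) < omega_lam a b (lam_q a b m)"
      by (rule omega_mono[OF ab, rotated]) (use pj pm in auto)
    then show ?thesis unfolding wj wm by simp
  qed
  from leD[OF ge] lt show False by (rule notE)
qed

lemma k_q_props:
  fixes a b :: real and q :: nat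
  assumes ab: "0 < b" "b < a" and q: "3 \<le> q"
  shows "sqrt (1 - b\<^sup>2 / a\<^sup>2) < k_q a b q" "k_q a b q < 1"
proof -
  have p: "0 < lam_q a b q" "lam_q a b q < b" using lam_q_props[OF ab q] by auto
  show "sqrt (1 - b\<^sup>2 / a\<^sup>2) < k_q a b q" unfolding k_q_def using kl_gt_e[OF ab p] .
  show "k_q a b q < 1" unfolding k_q_def using kl_facts[of b a "lam_q a b q"] ab p by auto
qed

lemma k_q_anti:
  fixes a b :: real and j m :: nat
  assumes ab: "0 < b" "b < a" and jm: "3 \<le> j" "j < m"
  shows "k_q a b m < k_q a b j"
proof -
  have pj: "lam_q a b j < b" using lam_q_props[OF ab jm(1)] by auto
  have pm: "0 < lam_q a b m" using lam_q_props[OF ab, of m] jm by auto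
  show ?thesis unfolding k_q_def
    by (rule kl_mono) (use ab pm pj lam_q_anti[OF ab jm] in auto)
qed


lemma KK_mono:
  fixes e k :: real
  assumes "0 \<le> e" "e \<le> k" "k < 1"
  shows "ellK k * sqrt (1 - k\<^sup>2) \<le> ellK e * sqrt (1 - e\<^sup>2)"
proof -
  have ka: "\<bar>k\<bar> < 1" "\<bar>e\<bar> < 1" using assms by auto
  have "integral {0..pi/2} (\<lambda>t. hk k t * sqrt (1 - k\<^sup>2)) \<le> integral {0..pi/2} (\<lambda>t. hk e t * sqrt (1 - e\<^sup>2))"
  proof (rule integral_le)
    show "(\<lambda>t. hk k t * sqrt (1 - k\<^sup>2)) integrable_on {0..pi/2}"
      using hk_int[OF ka(1)] by (rule integrable_on_mult_left)
    show "(\<lambda>t. hk e t * sqrt (1 - e\<^sup>2)) integrable_on {0..pi/2}"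
      using hk_int[OF ka(2)] by (rule integrable_on_mult_left)
    fix t :: real
    define s where "s = (sin t)\<^sup>2"
    have s: "0 \<le> s" "s \<le> 1" unfolding s_def using abs_sin_le_one[of t] by (auto simp: abs_square_le_1)
    have e2k2: "e\<^sup>2 \<le> k\<^sup>2" using assms by (simp add: power_mono)
    have pk: "0 < 1 - k\<^sup>2 * s" unfolding s_def by (rule den_pos[OF ka(1)])
    have pe: "0 < 1 - e\<^sup>2 * s" unfolding s_def by (rule den_pos[OF ka(2)])
    have "(1 - k\<^sup>2) * (1 - e\<^sup>2 * s) \<le> (1 - e\<^sup>2) * (1 - k\<^sup>2 * s)"
    proof -
      have "(1 - e\<^sup>2) * (1 - k\<^sup>2 * s) - (1 - k\<^sup>2) * (1 - e\<^sup>2 * s) = (k\<^sup>2 - e\<^sup>2) * (1 - s)"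
        by (simp add: algebra_simps)
      moreover have "0 \<le> (k\<^sup>2 - e\<^sup>2) * (1 - s)" using e2k2 s by simp
      ultimately show ?thesis by linarith
    qed
    then have "sqrt ((1 - k\<^sup>2) * (1 - e\<^sup>2 * s)) \<le> sqrt ((1 - e\<^sup>2) * (1 - k\<^sup>2 * s))"
      by simp
    then have "sqrt (1 - k\<^sup>2) * sqrt (1 - e\<^sup>2 * s) \<le> sqrt (1 - e\<^sup>2) * sqrt (1 - k\<^sup>2 * s)"
      by (simp add: real_sqrt_mult)
    then have "sqrt (1 - k\<^sup>2) / sqrt (1 - k\<^sup>2 * s) \<le> sqrt (1 - e\<^sup>2) / sqrt (1 - e\<^sup>2 * s)"
      using pk pe by (simp add: divide_le_eq le_divide_eq mult.commute mult.left_commute)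
    then show "hk k t * sqrt (1 - k\<^sup>2) \<le> hk e t * sqrt (1 - e\<^sup>2)"
      unfolding hk_def s_def by simp
  qed
  then show ?thesis by (simp add: ellK_def ellF_hk)
qed

lemma Kee_lt:
  fixes e :: real
  assumes "0 < e" "e < 1"
  shows "ellK e * sqrt (1 - e\<^sup>2) < pi / 2"
proof -
  have ka: "\<bar>e\<bar> < 1" using assms by auto
  have e2: "0 < e\<^sup>2" "e\<^sup>2 < 1" using assms by (auto simp: abs_square_less_1)
  have "integral {0..pi/2} (\<lambda>t. hk e t * sqrt (1 - e\<^sup>2)) < integral {0..pi/2} (\<lambda>t. 1)"
  proof (rule integral_less_real)
    show "continuous_on {0..pi/2} (\<lambda>t. hk e t * sqrt (1 - e\<^sup>2))"
      using cont_hk[OF ka] by (intro continuous_intros)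
    show "continuous_on {0..pi/2} (\<lambda>t. 1::real)" by simp
    show "{0<..<pi/2} \<noteq> {}" using pi_gt_zero by (simp add: not_le)
    fix t :: real assume t: "t \<in> {0<..<pi/2}"
    have c: "0 < cos t" using t by (intro cos_gt_zero) auto
    have "(sin t)\<^sup>2 < 1"
    proof -
      have "0 < (cos t)\<^sup>2" using c by simp
      then show ?thesis using sin_cos_squared_add[of t] by linarith
    qed
    then have "e\<^sup>2 * (sin t)\<^sup>2 < e\<^sup>2" using e2 by simp
    then have "sqrt (1 - e\<^sup>2) < sqrt (1 - e\<^sup>2 * (sin t)\<^sup>2)" by simp
    moreover have "0 < sqrt (1 - e\<^sup>2 * (sin t)\<^sup>2)" using den_pos[OF ka] by simp
    ultimately show "hk e t * sqrt (1 - e\<^sup>2) < 1" unfolding hk_def by (simp add: divide_less_eq)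
  qed
  then show ?thesis by (simp add: ellK_def ellF_hk)
qed

lemma main_ineq:
  fixes e k kj :: real
  assumes e: "0 < e" "e \<le> k" and k: "k < kj" "kj < 1"
  shows "rho kj * (pi / (2 * (ellK e * sqrt (1 - e\<^sup>2)))) \<le> sigma k (rho kj)"
proof -
  have kp: "0 < k" using e by simp
  have kjp: "0 < kj" using kp k by simp
  define r where "r = rho kj"
  have inv1: "1 < 1 / kj" using kjp k by simp
  have r0: "0 < r" unfolding r_def rho_def using inv1 k by simp
  have cr: "cosh r = 1 / kj" unfolding r_def rho_def using inv1 by simp
  have ka: "\<bar>k\<bar> < 1" using kp k by simp
  have k2: "k\<^sup>2 < 1" using ka by (simp add: abs_square_less_1)
  have bnd: "1 - k\<^sup>2 * (cosh t)\<^sup>2 \<le> 1 - k\<^sup>2 \<and> 0 < 1 - k\<^sup>2 * (cosh t)\<^sup>2" if t: "t \<in> {0..r}" for t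
  proof -
    have c1: "1 \<le> cosh t" by (rule cosh_real_ge_1)
    have "cosh t \<le> cosh r" using t r0 by (simp add: cosh_real_nonneg_le_iff)
    then have "k * cosh t \<le> k * (1 / kj)" using cr kp by (intro mult_left_mono) auto
    then have "k * cosh t \<le> k / kj" by simp
    moreover have "k / kj < 1" using k kjp by simp
    ultimately have kc: "k * cosh t < 1" by simp
    have kc0: "0 \<le> k * cosh t" using kp c1 by simp
    have "(k * cosh t)\<^sup>2 < 1" using kc kc0 by (simp add: abs_square_less_1)
    moreover have "k\<^sup>2 \<le> (k * cosh t)\<^sup>2" using c1 kp
      by (simp add: power_mult_distrib power_mono)
    ultimately show ?thesis by (simp add: power_mult_distrib)
  qed
  define g where "g = (\<lambda>t. 1 / sqrt (1 - k\<^sup>2 * (cosh t)\<^sup>2))"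
  have nz: "sqrt (1 - k\<^sup>2 * (cosh t)\<^sup>2) \<noteq> 0" if "t \<in> {0..r}" for t
    using bnd[OF that] by simp
  have cg: "continuous_on {0..r} g"
    unfolding g_def by (intro continuous_intros) (use nz in blast)
  have "integral {0..r} (\<lambda>t. 1 / sqrt (1 - k\<^sup>2)) \<le> integral {0..r} g"
  proof (rule integral_le)
    show "(\<lambda>t. 1 / sqrt (1 - k\<^sup>2)) integrable_on {0..r}" by (rule integrable_continuous_real) (rule continuous_on_const)
    show "g integrable_on {0..r}" using cg by (rule integrable_continuous_real)
    fix t assume t: "t \<in> {0..r}"
    have "sqrt (1 - k\<^sup>2 * (cosh t)\<^sup>2) \<le> sqrt (1 - k\<^sup>2)" using bnd[OF t] by simp
    then show "1 / sqrt (1 - k\<^sup>2) \<le> g t" unfolding g_def using bnd[OF t]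
      by (simp add: frac_le)
  qed
  then have I: "r / sqrt (1 - k\<^sup>2) \<le> integral {0..r} g" using r0 by simp
  have Kk: "0 < ellK k" by (rule ellK_pos[OF ka])
  have kpp: "0 < sqrt (1 - k\<^sup>2)" using k2 by simp
  have "r * (pi / (2 * (ellK e * sqrt (1 - e\<^sup>2)))) \<le> r * (pi / (2 * (ellK k * sqrt (1 - k\<^sup>2))))"
  proof -
    have "ellK k * sqrt (1 - k\<^sup>2) \<le> ellK e * sqrt (1 - e\<^sup>2)" by (rule KK_mono) (use e k in auto)
    moreover have "0 < ellK k * sqrt (1 - k\<^sup>2)" using Kk kpp by simp
    moreover have "0 < ellK e" by (rule ellK_pos) (use e k in auto)
    moreover have "0 < sqrt (1 - e\<^sup>2)"
    proof -
      have "\<bar>e\<bar> < 1" using e k by auto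
      then show ?thesis by (simp add: abs_square_less_1)
    qed
    ultimately have "pi / (2 * (ellK e * sqrt (1 - e\<^sup>2))) \<le> pi / (2 * (ellK k * sqrt (1 - k\<^sup>2)))"
      using Kk kpp by (intro divide_left_mono mult_pos_pos) auto
    then show ?thesis using r0 by (intro mult_left_mono) auto
  qed
  also have "\<dots> = 2 * pi / (4 * ellK k) * (r / sqrt (1 - k\<^sup>2))"
    using Kk kpp by (simp add: field_simps)
  also have "\<dots> \<le> 2 * pi / (4 * ellK k) * integral {0..r} g"
    using I Kk by (intro mult_left_mono) auto
  also have "\<dots> = sigma k r" unfolding sigma_def g_def by simp
  finally show ?thesis unfolding r_def .
qed

lemma rho_pos: "0 < kj \<Longrightarrow> kj < 1 \<Longrightarrow> 0 < rho kj"
  unfolding rho_def by simp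

lemma final_step:
  fixes r s beta ks :: real
  assumes "0 < r" "r * beta \<le> s" "1 < beta" "ks = (beta - 1) / 2"
  shows "r < s - r * ks"
proof -
  have "1 + ks < beta" using assms(3,4) by simp
  then have "r * (1 + ks) < r * beta" using assms(1) by (intro mult_strict_left_mono)
  then show ?thesis using assms(2) by (simp add: algebra_simps)
qed

theorem proposition9:
  fixes a b :: real
  assumes "0 < b" and "b \<le> a"
  defines "e0 \<equiv> sqrt (1 - b\<^sup>2 / a\<^sup>2)"
  assumes "0 < e0" and "e0 < 1"
  shows "\<exists>(\<kappa>::nat \<Rightarrow> real) \<kappa>star.
           0 < \<kappa>star \<and> decseq \<kappa> \<and> (\<forall>m. \<kappa>star \<le> \<kappa> m) \<and>
           (\<forall>m j. 3 \<le> j \<and> j < m \<longrightarrow>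
              rho (k_q a b j) < sigma (k_q a b m) (rho (k_q a b j)) - rho (k_q a b j) * \<kappa> m) \<and>
           (\<forall>j. 3 \<le> j \<longrightarrow>
              rho (k_q a b j) < sigma e0 (rho (k_q a b j)) - rho (k_q a b j) * \<kappa>star)"
proof -
  have ba: "b < a"
  proof (rule ccontr)
    assume "\<not> b < a"
    then have "a = b" using \<open>b \<le> a\<close> by simp
    then have z: "1 - b\<^sup>2 / a\<^sup>2 = 0" using \<open>0 < b\<close> by simp
    have "e0 = 0" unfolding e0_def z by simp
    then show False using \<open>0 < e0\<close> by simp
  qed
  note ab = \<open>0 < b\<close> ba
  define X where "X = ellK e0 * sqrt (1 - e0\<^sup>2)"
  have e0a: "\<bar>e0\<bar> < 1" using \<open>0 < e0\<close> \<open>e0 < 1\<close> by simp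
  have Xp: "0 < X"
  proof -
    have "0 < ellK e0" by (rule ellK_pos[OF e0a])
    moreover have "0 < sqrt (1 - e0\<^sup>2)" using e0a by (simp add: abs_square_less_1)
    ultimately show ?thesis unfolding X_def by simp
  qed
  have Xl: "X < pi / 2" unfolding X_def by (rule Kee_lt) (use \<open>0 < e0\<close> \<open>e0 < 1\<close> in auto)
  define beta where "beta = pi / (2 * X)"
  have beta1: "1 < beta" unfolding beta_def using Xp Xl by (simp add: less_divide_eq)
  define ks where "ks = (beta - 1) / 2"
  have ksp: "0 < ks" unfolding ks_def using beta1 by simp
  have kqe: "e0 < k_q a b q" "k_q a b q < 1" if "3 \<le> q" for q
    using k_q_props[OF ab that] by (auto simp: e0_def)
  have part1: "rho (k_q a b j) < sigma (k_q a b m) (rho (k_q a b j)) - rho (k_q a b j) * ks"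
    if jm: "3 \<le> j" "j < m" for j m
  proof (rule final_step[OF _ _ beta1 ks_def])
    have m3: "3 \<le> m" using jm by simp
    show "0 < rho (k_q a b j)" by (rule rho_pos) (use kqe[OF jm(1)] \<open>0 < e0\<close> in auto)
    show "rho (k_q a b j) * beta \<le> sigma (k_q a b m) (rho (k_q a b j))"
      unfolding beta_def X_def
      by (rule main_ineq) (use \<open>0 < e0\<close> kqe[OF m3] kqe[OF jm(1)] k_q_anti[OF ab jm] in auto)
  qed
  have part2: "rho (k_q a b j) < sigma e0 (rho (k_q a b j)) - rho (k_q a b j) * ks"
    if j: "3 \<le> j" for j
  proof (rule final_step[OF _ _ beta1 ks_def])
    show "0 < rho (k_q a b j)" by (rule rho_pos) (use kqe[OF j] \<open>0 < e0\<close> in auto)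
    show "rho (k_q a b j) * beta \<le> sigma e0 (rho (k_q a b j))"
      unfolding beta_def X_def
      by (rule main_ineq) (use \<open>0 < e0\<close> kqe[OF j] in auto)
  qed
  have "decseq (\<lambda>_::nat. ks)" by (simp add: decseq_def)
  then show ?thesis using ksp part1 part2
    by (intro exI[of _ "\<lambda>_::nat. ks"] exI[of _ ks]) auto
qed

end
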